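(* Let $\mathbf s^1:\mathcal X\to\{0,1\}^m$ be a first selection rule and, for $c\in[k]$, let $\tilde{\mathbf d}_c:\{0,1\}^m\times\mathcal X\to\mathcal D_c$ be decision strategies and $\tilde{\mathbf s}_c:\mathcal D_c\times\mathcal X\to\{0,1\}^m$ selection strategies. Suppose that for every $c\in[k]$ the extended selection rule $\mathbf g_c(\mathbf S,\mathbf X)=\tilde{\mathbf s}_c(\tilde{\mathbf d}_c(\mathbf S,\mathbf X),\mathbf X)$ is contracting ($\mathbf g_c(\mathbf S,\mathbf X)\preceq\mathbf S$ with probability 1 for all $\mathbf S$) and increasing ($\mathbf g_c(\mathbf S,\mathbf X)\preceq\mathbf g_c(\mathbf S',\mathbf X)$ with probability 1 for all $\mathbf S\preceq\mathbf S'$). Then the parallel intersection procedure and the sequential composition procedure (defined in the context) converge to the same selected set and the same decisions.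
   Context: $\preceq$ is the componentwise order on $\{0,1\}^m$; $\bigcap$ of vectors in $\{0,1\}^m$ is the componentwise product. Parallel intersection: $\mathbf S^1=\mathbf s^1(\mathbf X)$; for $t\ge1$, $\mathbf D_c^t=\tilde{\mathbf d}_c(\mathbf S^t,\mathbf X)$ and $\mathbf S_c^{t+1}=\tilde{\mathbf s}_c(\mathbf D_c^t,\mathbf X)$ for all $c$, $\mathbf S^{t+1}=\bigcap_{c\in[k]}\mathbf S_c^{t+1}$; stop at the first $T$ with $\mathbf S^{T+1}=\mathbf S^T$. Sequential composition: $\mathbf S^1=\mathbf s^1(\mathbf X)$; for $t\ge1$, set $\mathbf S'^{t+1}_0=\mathbf S^t$ and for $c=1,\dots,k$, $\mathbf D_c^t=\tilde{\mathbf d}_c(\mathbf S'^{t+1}_{c-1},\mathbf X)$, $\mathbf S'^{t+1}_c=\tilde{\mathbf s}_c(\mathbf D_c^t,\mathbf X)$; then $\mathbf S^{t+1}=\mathbf S'^{t+1}_k$; stop at the first $T$ with $\mathbf S^{T+1}=\mathbf S^T$. Each procedure outputs its final selected set and decisions $(\mathbf D_c^T)_{c\in[k]}$. *)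

theory Defs
  imports Main
begin

text \<open>Binary vectors in {0,1}^m are represented as subsets of a finite coordinate
type 'i (with CARD('i) = m): the componentwise order is set inclusion and the
componentwise product is intersection. Decisions of all k strategies live in a
common type 'd.\<close>

definition ext_sel :: "(nat \<Rightarrow> 'i set \<Rightarrow> 'x \<Rightarrow> 'd) \<Rightarrow> (nat \<Rightarrow> 'd \<Rightarrow> 'x \<Rightarrow> 'i set)
    \<Rightarrow> nat \<Rightarrow> 'i set \<Rightarrow> 'x \<Rightarrow> 'i set" where
  "ext_sel dd ss c S X = ss c (dd c S X) X"

definition par_step :: "nat \<Rightarrow> (nat \<Rightarrow> 'i set \<Rightarrow> 'x \<Rightarrow> 'd) \<Rightarrow> (nat \<Rightarrow> 'd \<Rightarrow> 'x \<Rightarrow> 'i set)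
    \<Rightarrow> 'x \<Rightarrow> 'i set \<Rightarrow> 'i set" where
  "par_step k dd ss X S = (\<Inter>c\<in>{1..k}. ext_sel dd ss c S X)"

primrec seq_inner :: "(nat \<Rightarrow> 'i set \<Rightarrow> 'x \<Rightarrow> 'd) \<Rightarrow> (nat \<Rightarrow> 'd \<Rightarrow> 'x \<Rightarrow> 'i set)
    \<Rightarrow> 'x \<Rightarrow> 'i set \<Rightarrow> nat \<Rightarrow> 'i set" where
  "seq_inner dd ss X S 0 = S"
| "seq_inner dd ss X S (Suc c) = ss (Suc c) (dd (Suc c) (seq_inner dd ss X S c) X) X"

definition seq_step :: "nat \<Rightarrow> (nat \<Rightarrow> 'i set \<Rightarrow> 'x \<Rightarrow> 'd) \<Rightarrow> (nat \<Rightarrow> 'd \<Rightarrow> 'x \<Rightarrow> 'i set)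
    \<Rightarrow> 'x \<Rightarrow> 'i set \<Rightarrow> 'i set" where
  "seq_step k dd ss X S = seq_inner dd ss X S k"

definition iter_sel :: "('i set \<Rightarrow> 'i set) \<Rightarrow> 'i set \<Rightarrow> nat \<Rightarrow> 'i set" where
  "iter_sel step S1 t = (step ^^ (t - 1)) S1"

definition first_stop :: "(nat \<Rightarrow> 'i set) \<Rightarrow> nat \<Rightarrow> bool" where
  "first_stop S T \<longleftrightarrow> 1 \<le> T \<and> S (T + 1) = S T \<and> (\<forall>t. 1 \<le> t \<and> t < T \<longrightarrow> S (t + 1) \<noteq> S t)"

end

theory Submission
  imports Defs
begin

lemma iter_contr:
  assumes "\<And>S. f S \<subseteq> S"
  shows "(f ^^ n) S1 \<subseteq> S1"
proof (induction n)
  case 0 then show ?case by simp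
next
  case (Suc n) then show ?case using assms[of "(f ^^ n) S1"] by auto
qed

lemma card_desc:
  fixes f :: "('i::finite) set \<Rightarrow> 'i set"
  assumes "\<And>S. f S \<subseteq> S"
    and "\<forall>m<n. (f ^^ Suc m) S1 \<noteq> (f ^^ m) S1"
  shows "card ((f ^^ n) S1) + n \<le> card S1"
  using assms(2)
proof (induction n)
  case 0 then show ?case by simp
next
  case (Suc n)
  have IH: "card ((f ^^ n) S1) + n \<le> card S1" using Suc by auto
  have "(f ^^ Suc n) S1 \<subset> (f ^^ n) S1"
    using Suc.prems assms(1)[of "(f ^^ n) S1"] by auto
  then have "card ((f ^^ Suc n) S1) < card ((f ^^ n) S1)"
    by (simp add: psubset_card_mono)
  then show ?case using IH by simp
qed

lemma stop_exists:
  fixes f :: "('i::finite) set \<Rightarrow> 'i set"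
  assumes "\<And>S. f S \<subseteq> S"
  shows "\<exists>T. first_stop (iter_sel f S1) T \<and> f (iter_sel f S1 T) = iter_sel f S1 T
             \<and> iter_sel f S1 T \<subseteq> S1"
proof -
  have ex: "\<exists>n. (f ^^ Suc n) S1 = (f ^^ n) S1"
  proof (rule ccontr)
    assume "\<not> ?thesis"
    then have "card ((f ^^ (Suc (card S1))) S1) + Suc (card S1) \<le> card S1"
      using card_desc[OF assms, of "Suc (card S1)" S1] by auto
    then show False by simp
  qed
  define n where "n = (LEAST n. (f ^^ Suc n) S1 = (f ^^ n) S1)"
  have n1: "(f ^^ Suc n) S1 = (f ^^ n) S1" unfolding n_def using ex by (rule LeastI_ex)
  have n2: "\<forall>m<n. (f ^^ Suc m) S1 \<noteq> (f ^^ m) S1"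
    unfolding n_def using not_less_Least by blast
  have it: "\<And>t. iter_sel f S1 (Suc t) = (f ^^ t) S1" by (simp add: iter_sel_def)
  have "first_stop (iter_sel f S1) (Suc n)"
    unfolding first_stop_def
  proof (intro conjI allI impI)
    show "iter_sel f S1 (Suc n + 1) = iter_sel f S1 (Suc n)"
      using n1 by (simp only: it Suc_eq_plus1[symmetric])
  next
    fix t assume "1 \<le> t \<and> t < Suc n"
    then obtain m where "t = Suc m" "m < n" by (cases t) auto
    then show "iter_sel f S1 (t + 1) \<noteq> iter_sel f S1 t"
      using n2 by (simp only: it Suc_eq_plus1[symmetric]) blast
  qed simp
  moreover have "f (iter_sel f S1 (Suc n)) = iter_sel f S1 (Suc n)"
    using n1 by (simp add: it)
  moreover have "iter_sel f S1 (Suc n) \<subseteq> S1"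
    using iter_contr[OF assms] by (simp add: it)
  ultimately show ?thesis by blast
qed

lemma gfp_below:
  assumes "\<And>S S'. S \<subseteq> S' \<Longrightarrow> f S \<subseteq> f S'"
    and "f F = F" and "F \<subseteq> S1"
  shows "F \<subseteq> (f ^^ n) S1"
proof (induction n)
  case 0 then show ?case using assms by simp
next
  case (Suc n) then show ?case using assms(1)[OF Suc] assms(2) by simp
qed

lemma gfp_below_iter:
  assumes "\<And>S S'. S \<subseteq> S' \<Longrightarrow> f S \<subseteq> f S'"
    and "f F = F" and "F \<subseteq> S1"
  shows "F \<subseteq> iter_sel f S1 T"
  unfolding iter_sel_def by (rule gfp_below[of f F S1, OF assms])

theorem proposition9:
  fixes k :: nat
    and s1 :: "'x \<Rightarrow> ('i::finite) set"
    and dd :: "nat \<Rightarrow> 'i set \<Rightarrow> 'x \<Rightarrow> 'd"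
    and ss :: "nat \<Rightarrow> 'd \<Rightarrow> 'x \<Rightarrow> 'i set"
    and X :: 'x
  assumes k_pos: "1 \<le> k"
    and contracting: "\<And>c S. c \<in> {1..k} \<Longrightarrow> ext_sel dd ss c S X \<subseteq> S"
    and increasing: "\<And>c S S'. c \<in> {1..k} \<Longrightarrow> S \<subseteq> S' \<Longrightarrow>
                        ext_sel dd ss c S X \<subseteq> ext_sel dd ss c S' X"
  shows "\<exists>Tp Ts.
           first_stop (iter_sel (par_step k dd ss X) (s1 X)) Tp \<and>
           first_stop (iter_sel (seq_step k dd ss X) (s1 X)) Ts \<and>
           iter_sel (par_step k dd ss X) (s1 X) Tp = iter_sel (seq_step k dd ss X) (s1 X) Ts \<and>
           (\<forall>c\<in>{1..k}. dd c (iter_sel (par_step k dd ss X) (s1 X) Tp) X =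
                        dd c (seq_inner dd ss X (iter_sel (seq_step k dd ss X) (s1 X) Ts) (c - 1)) X)"
proof -
  let ?g = "\<lambda>c S. ext_sel dd ss c S X"
  let ?P = "par_step k dd ss X"
  let ?Q = "seq_step k dd ss X"
  have si_suc: "\<And>S c. seq_inner dd ss X S (Suc c) = ?g (Suc c) (seq_inner dd ss X S c)"
    by (simp add: ext_sel_def)
  have k1: "1 \<in> {1..k}" using k_pos by simp
  have Pl: "\<And>S c. c \<in> {1..k} \<Longrightarrow> ?P S \<subseteq> ?g c S"
    unfolding par_step_def by (rule INT_lower)
  have Pc: "\<And>S. ?P S \<subseteq> S"
    using Pl[OF k1] contracting[OF k1] by (rule subset_trans)
  have Pm: "\<And>S S'. S \<subseteq> S' \<Longrightarrow> ?P S \<subseteq> ?P S'"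
    
  proof -
    fix S S' :: "'i set" assume a: "S \<subseteq> S'"
    show "?P S \<subseteq> ?P S'" unfolding par_step_def
    proof (rule INT_greatest)
      fix c assume c: "c \<in> {1..k}"
      have "(\<Inter>c\<in>{1..k}. ?g c S) \<subseteq> ?g c S" using c by (rule INT_lower)
      also have "\<dots> \<subseteq> ?g c S'" using increasing[OF c a] .
      finally show "(\<Inter>c\<in>{1..k}. ?g c S) \<subseteq> ?g c S'" .
    qed
  qed
  have sic: "\<And>S c. c \<le> k \<Longrightarrow> seq_inner dd ss X S c \<subseteq> S"
  proof -
    fix S c show "c \<le> k \<Longrightarrow> seq_inner dd ss X S c \<subseteq> S"
    proof (induction c)
      case 0 then show ?case by simp
    next
      case (Suc c)
      have c: "Suc c \<in> {1..k}" using Suc.prems by simp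
      have "seq_inner dd ss X S (Suc c) = ?g (Suc c) (seq_inner dd ss X S c)" by (rule si_suc)
      also have "\<dots> \<subseteq> seq_inner dd ss X S c" by (rule contracting[OF c])
      also have "\<dots> \<subseteq> S" using Suc.IH Suc.prems by simp
      finally show ?case .
    qed
  qed
  have sim: "\<And>S S' c. S \<subseteq> S' \<Longrightarrow> c \<le> k \<Longrightarrow> seq_inner dd ss X S c \<subseteq> seq_inner dd ss X S' c"
  proof -
    fix S S' c show "S \<subseteq> S' \<Longrightarrow> c \<le> k \<Longrightarrow> seq_inner dd ss X S c \<subseteq> seq_inner dd ss X S' c"
    proof (induction c)
      case 0 then show ?case by simp
    next
      case (Suc c)
      have c: "Suc c \<in> {1..k}" using Suc.prems by simp
      have "seq_inner dd ss X S (Suc c) = ?g (Suc c) (seq_inner dd ss X S c)" by (rule si_suc)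
      also have "\<dots> \<subseteq> ?g (Suc c) (seq_inner dd ss X S' c)"
        using increasing[OF c] Suc.IH Suc.prems by simp
      also have "\<dots> = seq_inner dd ss X S' (Suc c)" by (rule si_suc[symmetric])
      finally show ?case .
    qed
  qed
  have sidec: "\<And>S c d. c \<le> d \<Longrightarrow> d \<le> k \<Longrightarrow> seq_inner dd ss X S d \<subseteq> seq_inner dd ss X S c"
  proof -
    fix S c d show "c \<le> d \<Longrightarrow> d \<le> k \<Longrightarrow> seq_inner dd ss X S d \<subseteq> seq_inner dd ss X S c"
    proof (induction d)
      case 0 then show ?case by simp
    next
      case (Suc d)
      show ?case
      proof (cases "c = Suc d")
        case True then show ?thesis by simp
      next
        case False
        then have "c \<le> d" using Suc.prems by simp
        then have "seq_inner dd ss X S d \<subseteq> seq_inner dd ss X S c" using Suc by simp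
        moreover have "seq_inner dd ss X S (Suc d) \<subseteq> seq_inner dd ss X S d"
          using contracting[of "Suc d" "seq_inner dd ss X S d"] si_suc[of S d] Suc.prems by simp
        ultimately show ?thesis by blast
      qed
    qed
  qed
  have Qc: "\<And>S. ?Q S \<subseteq> S" unfolding seq_step_def using sic by simp
  have Qm: "\<And>S S'. S \<subseteq> S' \<Longrightarrow> ?Q S \<subseteq> ?Q S'" unfolding seq_step_def using sim by simp
  have Pfix: "\<And>S. ?P S = S \<Longrightarrow> \<forall>c\<in>{1..k}. ?g c S = S"
  proof -
    fix S assume "?P S = S"
    then have "\<forall>c\<in>{1..k}. S \<subseteq> ?g c S" using Pl by metis
    then show "\<forall>c\<in>{1..k}. ?g c S = S" using contracting by (meson subset_antisym)
  qed
  have Qfix_inner: "\<And>S c. ?Q S = S \<Longrightarrow> c \<le> k \<Longrightarrow> seq_inner dd ss X S c = S"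
  proof -
    fix S c assume a: "?Q S = S" "c \<le> k"
    have "seq_inner dd ss X S k \<subseteq> seq_inner dd ss X S c" using sidec a(2) by simp
    then have "S \<subseteq> seq_inner dd ss X S c" using a(1) by (simp add: seq_step_def)
    then show "seq_inner dd ss X S c = S" using sic a(2) by blast
  qed
  have Qfix: "\<And>S. ?Q S = S \<Longrightarrow> \<forall>c\<in>{1..k}. ?g c S = S"
  proof
    fix S c assume a: "?Q S = S" and c: "c \<in> {1..k}"
    then obtain d where d: "c = Suc d" "d < k" by (cases c) auto
    have "?g c S = ?g c (seq_inner dd ss X S d)" using Qfix_inner[OF a] d by simp
    also have "\<dots> = seq_inner dd ss X S c" using si_suc d by simp
    also have "\<dots> = S" using Qfix_inner[OF a] c by simp
    finally show "?g c S = S" .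
  qed
  have comm_inner: "\<And>S c. \<forall>c\<in>{1..k}. ?g c S = S \<Longrightarrow> c \<le> k \<Longrightarrow> seq_inner dd ss X S c = S"
  proof -
    fix S c assume a: "\<forall>c\<in>{1..k}. ?g c S = S"
    show "c \<le> k \<Longrightarrow> seq_inner dd ss X S c = S"
    proof (induction c)
      case 0 then show ?case by simp
    next
      case (Suc c)
      have c: "Suc c \<in> {1..k}" using Suc.prems by simp
      have "seq_inner dd ss X S (Suc c) = ?g (Suc c) (seq_inner dd ss X S c)" by (rule si_suc)
      also have "\<dots> = ?g (Suc c) S" using Suc.IH Suc.prems by simp
      also have "\<dots> = S" using a c by blast
      finally show ?case .
    qed
  qed
  have toP: "\<And>S. \<forall>c\<in>{1..k}. ?g c S = S \<Longrightarrow> ?P S = S"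
  proof -
    fix S assume a: "\<forall>c\<in>{1..k}. ?g c S = S"
    have "?P S = (\<Inter>c\<in>{1..k}. S)" unfolding par_step_def using a by (intro INF_cong) auto
    also have "\<dots> = S" using k1 by blast
    finally show "?P S = S" .
  qed
  have toQ: "\<And>S. \<forall>c\<in>{1..k}. ?g c S = S \<Longrightarrow> ?Q S = S"
    unfolding seq_step_def using comm_inner by simp
  obtain Tp where Tp: "first_stop (iter_sel ?P (s1 X)) Tp" "?P (iter_sel ?P (s1 X) Tp) = iter_sel ?P (s1 X) Tp"
    "iter_sel ?P (s1 X) Tp \<subseteq> s1 X"
    using stop_exists[of ?P "s1 X", OF Pc] by blast
  obtain Ts where Ts: "first_stop (iter_sel ?Q (s1 X)) Ts" "?Q (iter_sel ?Q (s1 X) Ts) = iter_sel ?Q (s1 X) Ts"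
    "iter_sel ?Q (s1 X) Ts \<subseteq> s1 X"
    using stop_exists[of ?Q "s1 X", OF Qc] by blast
  define A where "A = iter_sel ?P (s1 X) Tp"
  define B where "B = iter_sel ?Q (s1 X) Ts"
  have gA: "\<forall>c\<in>{1..k}. ?g c A = A" using Pfix Tp(2) A_def by simp
  have gB: "\<forall>c\<in>{1..k}. ?g c B = B" using Qfix Ts(2) B_def by simp
  have "A \<subseteq> B" unfolding B_def
    using gfp_below_iter[of ?Q A "s1 X" Ts, OF Qm toQ[OF gA]] Tp(3) A_def by blast
  moreover have "B \<subseteq> A" unfolding A_def
    using gfp_below_iter[of ?P B "s1 X" Tp, OF Pm toP[OF gB]] Ts(3) B_def by blast
  ultimately have AB: "A = B" by blast
  have "\<forall>c\<in>{1..k}. dd c A X = dd c (seq_inner dd ss X B (c - 1)) X"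
  proof
    fix c assume c: "c \<in> {1..k}"
    have "seq_inner dd ss X B (c - 1) = B" using comm_inner[OF gB, of "c - 1"] c by (meson diff_le_self le_trans atLeastAtMost_iff)
    then show "dd c A X = dd c (seq_inner dd ss X B (c - 1)) X" using AB by simp
  qed
  then show ?thesis using Tp(1) Ts(1) AB unfolding A_def B_def by blast
qed

end
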